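(* Let $\mathcal{P}$ be a probability distribution on $\mathbb{R}$ and let $X$ be a random variable with distribution $\mathcal{P}$. Define the tail quantile function $g(p) := \inf\{r \in \mathbb{R} : \mathbb{P}(X \geq r) \leq p\}$ for $0<p<1$. Assume that (1) $\mathbb{E}|X| < \infty$, and (2) $g(p) \to \infty$ as $p \to 0^+$, and $g$ is slowly varying at zero, i.e. $g(\lambda p)/g(p) \to 1$ as $p \to 0^+$ for every fixed $\lambda > 0$. For each $n \in \mathbb{N}$, let $X_1,\dots,X_n$ be i.i.d. with distribution $\mathcal{P}$ and set $M_n = \max_{1\le i\le n} X_i$; also let $(X_{ij})_{1\le i,j\le n}$ be an $n\times n$ random matrix with i.i.d. entries having distribution $\mathcal{P}$, and set $\mathcal{M}_n = \max_{\pi \in SS_n} \sum_{i=1}^n X_{i\pi(i)}$, where $SS_n$ is the set of permutations of $\{1,\dots,n\}$. Then $$\mathbb{E} M_n = g(1/n)(1+o(1)) \quad \text{as } n\to\infty,$$ and $$\mathbb{E} \mathcal{M}_n = n\, g(1/n)(1+o(1)) \quad \text{as } n\to\infty.$$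
   Context: $\{S(\pi)=\sum_{i=1}^n X_{i\pi(i)}, \pi\in SS_n\}$ is called the random assignment process; $\mathcal{M}_n$ is its maximum. *)

theory Defs
  imports "HOL-Probability.Probability" "HOL-Library.Landau_Symbols"
begin

definition tail_quantile :: "real measure \<Rightarrow> real \<Rightarrow> real" where
  "tail_quantile P p = Inf {r. measure P {r..} \<le> p}"

definition sample_max :: "nat \<Rightarrow> (nat \<Rightarrow> real) \<Rightarrow> real" where
  "sample_max n x = Max (x ` {..<n})"

definition assignment_max :: "nat \<Rightarrow> (nat \<times> nat \<Rightarrow> real) \<Rightarrow> real" where
  "assignment_max n x = Max ((\<lambda>\<pi>. \<Sum>i<n. x (i, \<pi> i)) ` {\<pi>. \<pi> permutes {..<n}})"

end

theory Submission
  imports Defs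
begin


locale tq =
  fixes P :: "real measure"
  assumes ps: "prob_space P" and sb: "sets P = sets borel" and intX: "integrable P (\<lambda>x. x)"
begin

interpretation prob_space P by (rule ps)

lemma space_P[simp]: "space P = UNIV"
  using sets_eq_imp_space_eq[OF sb] by simp

lemma atLeast_sets[simp]: "{r..} \<in> sets P" "{..<r} \<in> sets P" "{r<..} \<in> sets P"
  using sb by auto

lemma exists_small: assumes "p > 0" shows "\<exists>r. measure P {r..} \<le> p"
proof -
  have "(\<lambda>i. measure P {real i..}) \<longlonglongrightarrow> measure P (\<Inter>i. {real i..})"
    by (rule finite_Lim_measure_decseq) (auto simp: decseq_def)
  moreover have "(\<Inter>i. {real i..}) = {}"
    by (auto, metis le_floor_iff linorder_not_le reals_Archimedean2)
  ultimately have "(\<lambda>i. measure P {real i..}) \<longlonglongrightarrow> 0" by simp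
  then have "\<forall>\<^sub>F i in sequentially. measure P {real i..} < p" using assms
    by (rule order_tendstoD)
  then obtain i where "measure P {real i..} < p" unfolding eventually_sequentially by blast
  then show ?thesis by (intro exI[of _ "real i"]) simp
qed

lemma exists_big: assumes "p < 1" shows "\<exists>r. measure P {r..} > p"
proof -
  have "(\<lambda>i. measure P {- real i..}) \<longlonglongrightarrow> measure P (\<Union>i. {- real i..})"
    by (rule finite_Lim_measure_incseq) (auto simp: incseq_def)
  moreover have "(\<Union>i. {- real i..}) = UNIV"
    by (auto, metis minus_le_iff real_arch_simple)
  ultimately have "(\<lambda>i. measure P {- real i..}) \<longlonglongrightarrow> 1" using prob_space by simp
  then have "\<forall>\<^sub>F i in sequentially. measure P {- real i..} > p" using assms
    by (rule order_tendstoD)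
  then obtain i where "measure P {- real i..} > p" unfolding eventually_sequentially by blast
  then show ?thesis by blast
qed

definition g where "g = tail_quantile P"

lemma S_ne: "p > 0 \<Longrightarrow> {r. measure P {r..} \<le> p} \<noteq> {}"
  using exists_small by auto

lemma S_bdd: assumes "p < 1" shows "bdd_below {r. measure P {r..} \<le> p}"
proof -
  obtain r0 where r0: "measure P {r0..} > p" using exists_big assms by blast
  have "r0 \<le> r" if "measure P {r..} \<le> p" for r
  proof (rule ccontr)
    assume "\<not> r0 \<le> r"
    then have "measure P {r..} \<ge> measure P {r0..}" by (intro finite_measure_mono) auto
    then show False using that r0 by simp
  qed
  then show ?thesis by (auto simp: bdd_below_def)
qed

lemma g_upper: assumes "p > 0" "s > g p" shows "measure P {s..} \<le> p"
proof -
  from cInf_lessD[OF S_ne[OF assms(1)]] assms(2)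
  obtain r where r: "measure P {r..} \<le> p" "r < s" by (auto simp: g_def tail_quantile_def)
  have "measure P {s..} \<le> measure P {r..}" using r by (intro finite_measure_mono) auto
  then show ?thesis using r by simp
qed

lemma g_lower: assumes "p < 1" "s < g p" shows "measure P {s..} > p"
proof (rule ccontr)
  assume "\<not> ?thesis"
  then have "g p \<le> s" unfolding g_def tail_quantile_def
    by (intro cInf_lower S_bdd assms) auto
  then show False using assms by simp
qed

lemma g_mono: assumes "0 < p" "p \<le> q" "q < 1" shows "g q \<le> g p"
  unfolding g_def tail_quantile_def
  by (rule cInf_superset_mono) (use S_ne assms S_bdd in auto)

lemma PP: "product_prob_space (\<lambda>_::'i. P)"
  by (rule product_prob_spaceI) (rule ps)

lemma space_PiM_P: "space (PiM I (\<lambda>_. P)) = PiE I (\<lambda>_. UNIV)"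
  by (simp add: space_PiM)

lemma comp_distr: "i \<in> I \<Longrightarrow> distr (PiM I (\<lambda>_. P)) P (\<lambda>x. x i) = P"
  by (rule distr_PiM_component) (use ps in auto)

lemma comp_integrable:
  fixes h :: "real \<Rightarrow> real"
  assumes "i \<in> I" "integrable P h"
  shows "integrable (PiM I (\<lambda>_. P)) (\<lambda>x. h (x i))"
proof -
  have m: "(\<lambda>x. x i) \<in> measurable (PiM I (\<lambda>_. P)) P"
    using assms(1) by (rule measurable_component_singleton)
  have "h \<in> borel_measurable P" using assms(2) by auto
  then show ?thesis using assms integrable_distr_eq[OF m, of h] comp_distr[OF assms(1)] by simp
qed

lemma comp_integral:
  fixes h :: "real \<Rightarrow> real"
  assumes "i \<in> I" "h \<in> borel_measurable P"
  shows "integral\<^sup>L (PiM I (\<lambda>_. P)) (\<lambda>x. h (x i)) = integral\<^sup>L P h"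
proof -
  have m: "(\<lambda>x. x i) \<in> measurable (PiM I (\<lambda>_. P)) P"
    using assms(1) by (rule measurable_component_singleton)
  show ?thesis using integral_distr[OF m assms(2)] comp_distr[OF assms(1)] by simp
qed

lemma intAbs: "integrable P abs" using intX by (rule integrable_abs)

lemma psPi: "prob_space (PiM I (\<lambda>_. P))"
  by (rule prob_space_PiM) (use ps in auto)

lemma sum_abs_integrable:
  assumes "finite I"
  shows "integrable (PiM I (\<lambda>_. P)) (\<lambda>x. (\<Sum>i\<in>I. \<bar>x i\<bar>))"
  by (intro Bochner_Integration.integrable_sum comp_integrable[OF _ intAbs])

lemma const_integrable: "integrable (PiM I (\<lambda>_. P)) (\<lambda>x. c::real)"
  using prob_space.finite_measure[OF psPi] by (rule finite_measure.integrable_const)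

lemma emeas_fin: "emeasure (PiM I (\<lambda>_. P)) A < \<top>"
  using finite_measure.emeasure_finite[OF prob_space.finite_measure[OF psPi]] by (simp add: top.not_eq_extremum)

lemma comp_meas: assumes "i \<in> I" shows "(\<lambda>x. x i) \<in> borel_measurable (PiM I (\<lambda>_. P))"
proof -
  have "(\<lambda>x. x i) \<in> PiM I (\<lambda>_. P) \<rightarrow>\<^sub>M P" by (rule measurable_component_singleton[OF assms])
  then show ?thesis unfolding measurable_cong_sets[OF refl sb] .
qed

lemma int_bound:
  fixes I :: "'i set"
  assumes "finite I" "f \<in> borel_measurable (PiM I (\<lambda>_. P))"
    "\<And>x. x \<in> space (PiM I (\<lambda>_. P)) \<Longrightarrow> \<bar>f x\<bar> \<le> c + (\<Sum>i\<in>I. \<bar>x i\<bar>)"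
  shows "integrable (PiM I (\<lambda>_. P)) f"
proof (rule Bochner_Integration.integrable_bound)
  interpret PS: product_prob_space "\<lambda>_::'i. P" by (rule PP)
  show "integrable (PiM I (\<lambda>_. P)) (\<lambda>x. \<bar>c\<bar> + (\<Sum>i\<in>I. \<bar>x i\<bar>))"
    by (intro Bochner_Integration.integrable_add const_integrable sum_abs_integrable assms)
  show "f \<in> borel_measurable (PiM I (\<lambda>_. P))" by fact
  show "AE x in PiM I (\<lambda>_. P). norm (f x) \<le> norm (\<bar>c\<bar> + (\<Sum>i\<in>I. \<bar>x i\<bar>))"
  proof (intro AE_I2)
    fix x assume "x \<in> space (PiM I (\<lambda>_. P))"
    from assms(3)[OF this] show "norm (f x) \<le> norm (\<bar>c\<bar> + (\<Sum>i\<in>I. \<bar>x i\<bar>))"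
      by (simp add: sum_nonneg)
  qed
qed

lemma abs_Max_le: "finite I \<Longrightarrow> I \<noteq> {} \<Longrightarrow> \<bar>Max (x ` I)\<bar> \<le> (\<Sum>i\<in>I. \<bar>x i :: real\<bar>)"
proof -
  assume "finite I" "I \<noteq> {}"
  then have "Max (x ` I) \<in> x ` I" by (intro Max_in) auto
  then obtain j where "j \<in> I" "Max (x ` I) = x j" by auto
  then show ?thesis using member_le_sum[of j I "\<lambda>i. \<bar>x i\<bar>"] \<open>finite I\<close> by auto
qed

lemma Max_integrable:
  fixes I :: "'i set"
  assumes "finite I" "I \<noteq> {}"
  shows "integrable (PiM I (\<lambda>_. P)) (\<lambda>x. Max (x ` I))"
proof (rule int_bound[where c=0])
  show "(\<lambda>x. Max (x ` I)) \<in> borel_measurable (PiM I (\<lambda>_. P))"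
    by (rule borel_measurable_Max[OF assms(1), of "\<lambda>i x. x i"]) (rule comp_meas)
qed (use assms abs_Max_le in auto)

lemma measure_PiE:
  fixes I :: "'i set"
  assumes "finite I" "A \<in> sets P"
  shows "measure (PiM I (\<lambda>_. P)) (PiE I (\<lambda>_. A)) = measure P A ^ card I"
proof -
  interpret PS: product_prob_space "\<lambda>_::'i. P" by (rule PP)
  interpret F: finite_product_prob_space "\<lambda>_::'i. P" I by unfold_locales fact
  show ?thesis using F.prob_times[of "\<lambda>_. A"] assms by simp
qed

lemma Max_lower:
  fixes I :: "'i set"
  assumes "finite I" "I \<noteq> {}" "s \<ge> 0" "measure P {s..} \<ge> q" "q \<le> 1"
  shows "integral\<^sup>L (PiM I (\<lambda>_. P)) (\<lambda>x. Max (x ` I)) \<ge> s * (1 - (1 - q) ^ card I) - integral\<^sup>L P abs"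
proof -
  interpret PS: product_prob_space "\<lambda>_::'i. P" by (rule PP)
  interpret F: finite_product_prob_space "\<lambda>_::'i. P" I by unfold_locales fact
  obtain i0 where i0: "i0 \<in> I" using assms by auto
  define E where "E = PiE I (\<lambda>_::'i. {..<s})"
  have Esets: "E \<in> sets (PiM I (\<lambda>_. P))" unfolding E_def
    by (rule sets_PiM_I_finite) (use assms in auto)
  let ?f = "\<lambda>x. s * (1 - indicator E x) - \<bar>x i0\<bar>"
  have fint: "integrable (PiM I (\<lambda>_. P)) ?f"
  proof (intro Bochner_Integration.integrable_diff)
    show "integrable (PiM I (\<lambda>_. P)) (\<lambda>x. \<bar>x i0\<bar>)" by (rule comp_integrable[OF i0 intAbs])
    have "integrable (PiM I (\<lambda>_. P)) (\<lambda>x. 1 - indicator E x :: real)"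
      by (intro Bochner_Integration.integrable_diff const_integrable integrable_real_indicator Esets) (use emeas_fin in auto)
    then show "integrable (PiM I (\<lambda>_. P)) (\<lambda>x. s * (1 - indicator E x))"
      by (rule integrable_mult_right)
  qed
  have i1: "integrable (PiM I (\<lambda>_. P)) (\<lambda>x. 1 - indicator E x :: real)"
      by (intro Bochner_Integration.integrable_diff const_integrable integrable_real_indicator Esets) (use emeas_fin in auto)
  have i2: "integrable (PiM I (\<lambda>_. P)) (\<lambda>x. \<bar>x i0\<bar>)" by (rule comp_integrable[OF i0 intAbs])
  have "integral\<^sup>L (PiM I (\<lambda>_. P)) ?f = s * integral\<^sup>L (PiM I (\<lambda>_. P)) (\<lambda>x. 1 - indicator E x :: real) - integral\<^sup>L (PiM I (\<lambda>_. P)) (\<lambda>x. \<bar>x i0\<bar>)"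
    using Bochner_Integration.integral_diff[OF integrable_mult_right[OF i1, of s] i2] by simp
  also have "integral\<^sup>L (PiM I (\<lambda>_. P)) (\<lambda>x. 1 - indicator E x :: real) = 1 - measure (PiM I (\<lambda>_. P)) E"
    using Bochner_Integration.integral_diff[OF const_integrable[of I 1] integrable_real_indicator[OF Esets]] emeas_fin[of I E]
      prob_space.prob_space[OF psPi] Int_absorb2[OF sets.sets_into_space[OF Esets]] by simp
  also have "integral\<^sup>L (PiM I (\<lambda>_. P)) (\<lambda>x. \<bar>x i0\<bar>) = integral\<^sup>L P abs"
    using comp_integral[OF i0, of abs] intAbs by auto
  finally have "integral\<^sup>L (PiM I (\<lambda>_. P)) ?f = s * (1 - measure (PiM I (\<lambda>_. P)) E) - integral\<^sup>L P abs" .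
  also have "measure (PiM I (\<lambda>_. P)) E = measure P {..<s} ^ card I"
    unfolding E_def using measure_PiE[OF assms(1), of "{..<s}"] by simp
  also have "measure P {..<s} = 1 - measure P {s..}"
  proof -
    have "{..<s} = space P - {s..}" by auto
    then show ?thesis using prob_compl[of "{s..}"] by simp
  qed
  finally have eq: "integral\<^sup>L (PiM I (\<lambda>_. P)) ?f = s * (1 - (1 - measure P {s..}) ^ card I) - integral\<^sup>L P abs" .
  have "(1 - measure P {s..}) ^ card I \<le> (1 - q) ^ card I"
    by (rule power_mono) (use assms in auto)
  then have "s * (1 - (1 - q) ^ card I) \<le> s * (1 - (1 - measure P {s..}) ^ card I)"
    using assms(3) by (intro mult_left_mono) auto
  moreover have "integral\<^sup>L (PiM I (\<lambda>_. P)) ?f \<le> integral\<^sup>L (PiM I (\<lambda>_. P)) (\<lambda>x. Max (x ` I))"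
  proof (rule integral_mono[OF fint Max_integrable[OF assms(1,2)]])
    fix x assume x: "x \<in> space (PiM I (\<lambda>_. P))"
    show "?f x \<le> Max (x ` I)"
    proof (cases "x \<in> E")
      case True
      have "x i0 \<le> Max (x ` I)" using i0 assms(1) by auto
      then show ?thesis using True by simp
    next
      case False
      then obtain i where i: "i \<in> I" "x i \<ge> s" using x unfolding E_def by (auto simp: space_PiM PiE_iff not_less)
      have "x i \<le> Max (x ` I)" using i assms(1) by auto
      then show ?thesis using False i by simp
    qed
  qed
  ultimately show ?thesis using eq by linarith
qed

end

locale tq2 = tq +
  assumes gInf: "filterlim (tail_quantile P) at_top (at_right 0)"
    and sv: "\<And>c. c > 0 \<Longrightarrow> ((\<lambda>p. tail_quantile P (c * p) / tail_quantile P p) \<longlongrightarrow> 1) (at_right 0)"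
begin

interpretation prob_space P by (rule ps)

lemma gInf': "filterlim g at_top (at_right 0)" using gInf by (simp add: g_def)

lemma sv': "c > 0 \<Longrightarrow> ((\<lambda>p. g (c * p) / g p) \<longlongrightarrow> 1) (at_right 0)"
  using sv by (simp add: g_def)

lemma potter0: "\<exists>q0>0. q0 \<le> 1/2 \<and> (\<forall>p. 0 < p \<and> p < q0 \<longrightarrow> g p > 0 \<and> g (p/4) \<le> 2 * g p)"
proof -
  have e1: "eventually (\<lambda>p. g p > 0) (at_right (0::real))"
    using gInf' by (simp add: filterlim_at_top_dense)
  have "eventually (\<lambda>p. g ((1/4) * p) / g p < 2) (at_right (0::real))"
    using sv'[of "1/4"] by (rule order_tendstoD) auto
  then have "eventually (\<lambda>p. g p > 0 \<and> g (p/4) \<le> 2 * g p) (at_right (0::real))"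
    using e1 by eventually_elim (auto simp: divide_simps mult.commute)
  then obtain b where b: "b > 0" "\<forall>y>0. y < b \<longrightarrow> g y > 0 \<and> g (y/4) \<le> 2 * g y"
    unfolding eventually_at_right_field by auto
  show ?thesis
    by (rule exI[of _ "min b (1/2)"]) (use b in auto)
qed

definition q0 where "q0 = (SOME q0. q0>0 \<and> q0 \<le> 1/2 \<and> (\<forall>p. 0 < p \<and> p < q0 \<longrightarrow> g p > 0 \<and> g (p/4) \<le> 2 * g p))"

lemma q0: "q0 > 0" "q0 \<le> 1/2" "\<And>p. 0 < p \<Longrightarrow> p < q0 \<Longrightarrow> g p > 0" "\<And>p. 0 < p \<Longrightarrow> p < q0 \<Longrightarrow> g (p/4) \<le> 2 * g p"
  using someI_ex[OF potter0] unfolding q0_def[symmetric] by auto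

lemma potter: assumes "0 < p" "p < q0" shows "g (p / 4^k) \<le> 2^k * g p"
proof (induction k)
  case 0 then show ?case by simp
next
  case (Suc k)
  have "p / 4^k \<le> p" using assms by (simp add: divide_le_eq)
  then have "g ((p / 4^k) / 4) \<le> 2 * g (p / 4^k)" using assms by (intro q0) auto
  then show ?case using Suc by (simp add: field_simps)
qed


lemma tail_bound:
  assumes p: "0 < p" "p < q0"
  shows "integral\<^sup>L P (\<lambda>x. max (x - (g p + 1)) 0) \<le> p * (4 * g p + 2)"
proof -
  define t where "t k = g (p / 4^k) + 1" for k :: nat
  have pk: "0 < p / 4^k" "p / 4^k < q0" for k :: nat
  proof -
    have "1 \<le> (4::real)^k" by simp
    then have "q0 \<le> q0 * 4^k" using q0(1) by (metis mult_le_cancel_left1 less_le_not_le)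
    then have "p < q0 * 4^k" using p by linarith
    then show "0 < p / 4^k" "p / 4^k < q0" using p by (auto simp: divide_less_eq)
  qed
  have tpos: "t k > 0" for k unfolding t_def using q0(3)[OF pk] by (simp add: add_pos_pos)
  have lim0: "filterlim (\<lambda>k::nat. p / 4^k) (at_right 0) sequentially"
  proof (rule tendsto_imp_filterlim_at_right)
    have "(\<lambda>k::nat. p * (1/4)^k) \<longlonglongrightarrow> p * 0"
      by (intro tendsto_mult tendsto_const LIMSEQ_power_zero) auto
    moreover have "(\<lambda>k::nat. p * (1/4)^k) = (\<lambda>k::nat. p / 4^k)" by (simp add: power_one_over)
    ultimately show "(\<lambda>k::nat. p / 4^k) \<longlonglongrightarrow> 0" by simp
    show "\<forall>\<^sub>F k in sequentially. p / 4 ^ k > 0" using p by simp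
  qed
  have tinf: "filterlim t at_top sequentially" unfolding t_def
    by (rule filterlim_at_top_mono[OF filterlim_compose[OF gInf' lim0]]) auto
  have pw: "ennreal (max (x - t 0) 0) \<le> (\<Sum>k. ennreal (t (Suc k)) * indicator {t k..} x)" for x
  proof (cases "x < t 0")
    case True then show ?thesis by simp
  next
    case False
    from tinf have "eventually (\<lambda>k. t k > x) sequentially" by (simp add: filterlim_at_top_dense)
    then obtain N where N: "\<And>k. k \<ge> N \<Longrightarrow> t k > x" unfolding eventually_sequentially by blast
    define K where "K = {k. t k \<le> x}"
    have finK: "finite K" unfolding K_def
    proof (rule finite_subset[of _ "{..<N}"])
      show "{k. t k \<le> x} \<subseteq> {..<N}"
      proof
        fix k assume "k \<in> {k. t k \<le> x}"
        then have "t k \<le> x" by simp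
        then have "\<not> N \<le> k" using N by (meson not_less)
        then show "k \<in> {..<N}" by simp
      qed
    qed simp
    have "0 \<in> K" using False by (simp add: K_def)
    define j where "j = Max K"
    have jK: "j \<in> K" unfolding j_def using finK \<open>0 \<in> K\<close> by (intro Max_in) auto
    have "Suc j \<notin> K"
    proof
      assume "Suc j \<in> K"
      then have "Suc j \<le> Max K" by (rule Max_ge[OF finK])
      then show False using j_def by simp
    qed
    then have tj: "t (Suc j) > x" by (simp add: K_def)
    have "ennreal (max (x - t 0) 0) \<le> ennreal (t (Suc j))"
      using tj tpos[of 0] tpos[of "Suc j"] by (intro ennreal_leI) auto
    also have "\<dots> = ennreal (t (Suc j)) * indicator {t j..} x" using jK by (simp add: K_def)
    also have "\<dots> \<le> (\<Sum>k. ennreal (t (Suc k)) * indicator {t k..} x)"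
    proof (rule ccontr)
      let ?f = "\<lambda>k. ennreal (t (Suc k)) * indicator {t k..} x"
      assume "\<not> ?f j \<le> suminf ?f"
      then have "suminf ?f < ?f j" by simp
      then have "?f j < ?f j" by (rule ennreal_suminf_lessD)
      then show False by simp
    qed
    finally show ?thesis .
  qed
  have "(\<integral>\<^sup>+ x. ennreal (max (x - t 0) 0) \<partial>P) \<le> (\<integral>\<^sup>+ x. (\<Sum>k. ennreal (t (Suc k)) * indicator {t k..} x) \<partial>P)"
    by (intro nn_integral_mono pw)
  also have "\<dots> = (\<Sum>k. \<integral>\<^sup>+ x. ennreal (t (Suc k)) * indicator {t k..} x \<partial>P)"
    by (rule nn_integral_suminf) (intro borel_measurable_times_ennreal borel_measurable_const borel_measurable_indicator atLeast_sets)
  also have "\<dots> = (\<Sum>k. ennreal (t (Suc k)) * emeasure P {t k..})"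
    by (simp add: nn_integral_cmult_indicator)
  also have "\<dots> \<le> (\<Sum>k. ennreal (p * (2 * g p * (1/2)^k + (1/4)^k)))"
  proof (intro suminf_le summableI)
    fix k :: nat
    have m: "measure P {t k..} \<le> p / 4^k"
      by (rule g_upper) (use pk[of k] in \<open>auto simp: t_def\<close>)
    have pt: "g (p / 4^(Suc k)) \<le> 2^(Suc k) * g p" by (rule potter[OF p])
    have "t (Suc k) * (p / 4^k) \<le> (2^(Suc k) * g p + 1) * (p / 4^k)"
      using pt pk[of k] by (intro mult_right_mono) (auto simp: t_def)
    also have "\<dots> = p * (2 * g p * (1/2)^k + (1/4)^k)"
    proof -
      have e: "(2::real)^k * 2^k = 4^k" by (simp flip: power_mult_distrib)
      show ?thesis by (simp add: field_simps power_divide e)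
    qed
    finally have le: "t (Suc k) * (p / 4^k) \<le> p * (2 * g p * (1/2)^k + (1/4)^k)" .
    have "ennreal (t (Suc k)) * emeasure P {t k..} = ennreal (t (Suc k)) * ennreal (measure P {t k..})"
      by (simp add: emeasure_eq_measure)
    also have "\<dots> \<le> ennreal (t (Suc k)) * ennreal (p / 4^k)"
      by (intro mult_left_mono ennreal_leI m) auto
    also have "\<dots> = ennreal (t (Suc k) * (p / 4^k))"
      using tpos[of "Suc k"] p by (subst ennreal_mult) auto
    also have "\<dots> \<le> ennreal (p * (2 * g p * (1/2)^k + (1/4)^k))"
      by (rule ennreal_leI[OF le])
    finally show "ennreal (t (Suc k)) * emeasure P {t k..} \<le> ennreal (p * (2 * g p * (1/2)^k + (1/4)^k))" .
  qed
  also have "\<dots> = ennreal (\<Sum>k. p * (2 * g p * (1/2)^k + (1/4)^k))"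
  proof (rule suminf_ennreal2)
    show "0 \<le> p * (2 * g p * (1/2)^k + (1/4)^k)" for k :: nat
      using p q0(3)[OF p] by (intro mult_nonneg_nonneg add_nonneg_nonneg) auto
    show "summable (\<lambda>k::nat. p * (2 * g p * (1/2)^k + (1/4)^k))"
      by (intro summable_mult summable_add summable_geometric) auto
  qed
  also have "(\<Sum>k. p * (2 * g p * (1/2)^k + (1/4)^k)) = p * (2 * g p * 2 + 4/3)"
  proof -
    have "(\<lambda>k::nat. (2 * g p) * (1/2)^k) sums ((2 * g p) * (1 / (1 - 1/2)))"
      by (intro sums_mult geometric_sums) auto
    moreover have "(\<lambda>k::nat. (1/4::real)^k) sums (1 / (1 - 1/4))"
      by (intro geometric_sums) auto
    ultimately have "(\<lambda>k::nat. (2 * g p) * (1/2)^k + (1/4)^k) sums ((2 * g p) * (1 / (1 - 1/2)) + 1 / (1 - 1/4))"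
      by (rule sums_add)
    then have "(\<lambda>k::nat. p * ((2 * g p) * (1/2)^k + (1/4)^k)) sums (p * ((2 * g p) * (1 / (1 - 1/2)) + 1 / (1 - 1/4)))"
      by (rule sums_mult)
    then show ?thesis by (simp add: sums_iff)
  qed
  finally have le1: "(\<integral>\<^sup>+ x. ennreal (max (x - t 0) 0) \<partial>P) \<le> ennreal (p * (2 * g p * 2 + 4/3))" .
  have int: "integrable P (\<lambda>x. max (x - t 0) 0)"
    by (intro integrable_max Bochner_Integration.integrable_diff intX) auto
  have "(\<integral>\<^sup>+ x. ennreal (max (x - t 0) 0) \<partial>P) = ennreal (integral\<^sup>L P (\<lambda>x. max (x - t 0) 0))"
    by (rule nn_integral_eq_integral[OF int]) auto
  have "integral\<^sup>L P (\<lambda>x. max (x - t 0) 0) \<le> p * (2 * g p * 2 + 4/3)"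
  proof -
    have "0 \<le> p * (2 * g p * 2 + 4/3)" using p q0(3)[OF p] by simp
    moreover have "ennreal (integral\<^sup>L P (\<lambda>x. max (x - t 0) 0)) \<le> ennreal (p * (2 * g p * 2 + 4/3))"
      using le1 \<open>(\<integral>\<^sup>+ x. ennreal (max (x - t 0) 0) \<partial>P) = _\<close> by simp
    ultimately show ?thesis by simp
  qed
  moreover have "p * (4 * g p + 4/3) \<le> p * (4 * g p + 2)" using p by (intro mult_left_mono) auto
  ultimately show ?thesis unfolding t_def by simp
qed

end


definition Inj :: "'a set \<Rightarrow> 'b set \<Rightarrow> ('a \<Rightarrow> 'b) set" where
  "Inj R C = {\<pi> \<in> R \<rightarrow>\<^sub>E C. inj_on \<pi> R}"

definition Aval :: "nat set \<Rightarrow> nat set \<Rightarrow> (nat \<times> nat \<Rightarrow> real) \<Rightarrow> real" where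
  "Aval R C x = Max ((\<lambda>\<pi>. \<Sum>i\<in>R. x (i, \<pi> i)) ` Inj R C)"

lemma Inj_finite: "finite R \<Longrightarrow> finite C \<Longrightarrow> finite (Inj R C)"
  unfolding Inj_def by (rule finite_subset[OF _ finite_PiE]) auto

lemma Inj_ne: assumes "finite R" "finite C" "card R \<le> card C" shows "Inj R C \<noteq> {}"
proof -
  obtain f where f: "f ` R \<subseteq> C" "inj_on f R" using card_le_inj[OF assms] by blast
  have "restrict f R \<in> Inj R C" using f unfolding Inj_def by (auto simp: inj_on_def)
  then show ?thesis by auto
qed

lemma Aval_in: assumes "finite R" "finite C" "card R \<le> card C"
  shows "\<exists>\<pi>\<in>Inj R C. Aval R C x = (\<Sum>i\<in>R. x (i, \<pi> i))"
proof -
  have "Aval R C x \<in> (\<lambda>\<pi>. \<Sum>i\<in>R. x (i, \<pi> i)) ` Inj R C"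
    unfolding Aval_def using Inj_finite[OF assms(1,2)] Inj_ne[OF assms] by (intro Max_in) auto
  then show ?thesis by auto
qed

lemma Aval_ge: assumes "finite R" "finite C" "\<pi> \<in> Inj R C"
  shows "Aval R C x \<ge> (\<Sum>i\<in>R. x (i, \<pi> i))"
  unfolding Aval_def using Inj_finite[OF assms(1,2)] assms(3) by (intro Max_ge) auto

lemma Aval_empty: "Aval {} C x = 0"
  unfolding Aval_def Inj_def by simp

lemma Aval_cong: assumes "\<And>i. i \<in> R \<times> C \<Longrightarrow> x i = x' i" shows "Aval R C x = Aval R C x'"
proof -
  have "(\<lambda>\<pi>. \<Sum>i\<in>R. x (i, \<pi> i)) ` Inj R C = (\<lambda>\<pi>. \<Sum>i\<in>R. x' (i, \<pi> i)) ` Inj R C"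
  proof (intro image_cong refl sum.cong)
    fix \<pi> i assume "\<pi> \<in> Inj R C" "i \<in> R"
    then show "x (i, \<pi> i) = x' (i, \<pi> i)" using assms by (auto simp: Inj_def)
  qed
  then show ?thesis by (simp add: Aval_def)
qed

lemma Aval_step:
  assumes "finite R" "finite C" "r \<notin> R" "j \<in> C" "card R < card C"
  shows "Aval (insert r R) C x \<ge> x (r, j) + Aval R (C - {j}) x"
proof -
  have cc: "card R \<le> card (C - {j})" using assms by simp
  obtain \<pi> where \<pi>: "\<pi> \<in> Inj R (C - {j})" "Aval R (C - {j}) x = (\<Sum>i\<in>R. x (i, \<pi> i))"
    using Aval_in[OF assms(1) _ cc] assms(2) by blast
  define \<sigma> where "\<sigma> = \<pi>(r := j)"
  have "\<sigma> \<in> Inj (insert r R) C"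
    using \<pi>(1) assms(3,4) unfolding Inj_def \<sigma>_def
    by (auto simp: PiE_iff inj_on_def extensional_def)
  then have "Aval (insert r R) C x \<ge> (\<Sum>i\<in>insert r R. x (i, \<sigma> i))"
    using assms by (intro Aval_ge) auto
  also have "(\<Sum>i\<in>insert r R. x (i, \<sigma> i)) = x (r, j) + (\<Sum>i\<in>R. x (i, \<pi> i))"
    using assms(1,3) unfolding \<sigma>_def by (auto intro!: sum.cong)
  finally show ?thesis using \<pi>(2) by simp
qed

lemma Aval_abs: assumes "finite R" "finite C" "card R \<le> card C" "finite J" "R \<times> C \<subseteq> J"
  shows "\<bar>Aval R C x\<bar> \<le> (\<Sum>i\<in>J. \<bar>x i\<bar>)"
proof -
  obtain \<pi> where \<pi>: "\<pi> \<in> Inj R C" "Aval R C x = (\<Sum>i\<in>R. x (i, \<pi> i))"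
    using Aval_in[OF assms(1-3)] by blast
  have inj: "inj_on (\<lambda>i. (i, \<pi> i)) R" by (auto simp: inj_on_def)
  have sub: "(\<lambda>i. (i, \<pi> i)) ` R \<subseteq> J" using \<pi>(1) assms(5) by (auto simp: Inj_def)
  have "\<bar>Aval R C x\<bar> \<le> (\<Sum>i\<in>R. \<bar>x (i, \<pi> i)\<bar>)" using \<pi>(2) by (simp add: sum_abs)
  also have "\<dots> = (\<Sum>k\<in>(\<lambda>i. (i, \<pi> i)) ` R. \<bar>x k\<bar>)" using sum.reindex[OF inj, of "\<lambda>k. \<bar>x k\<bar>"] by simp
  also have "\<dots> \<le> (\<Sum>i\<in>J. \<bar>x i\<bar>)" by (rule sum_mono2[OF assms(4) sub]) auto
  finally show ?thesis .
qed

lemma Aval_upper: assumes "finite R" "finite C" "card R \<le> card C" "C \<noteq> {}"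
  shows "Aval R C x \<le> (\<Sum>i\<in>R. Max ((\<lambda>j. x (i, j)) ` C))"
proof -
  obtain \<pi> where \<pi>: "\<pi> \<in> Inj R C" "Aval R C x = (\<Sum>i\<in>R. x (i, \<pi> i))"
    using Aval_in[OF assms(1-3)] by blast
  show ?thesis unfolding \<pi>(2)
  proof (rule sum_mono)
    fix i assume "i \<in> R"
    then have "\<pi> i \<in> C" using \<pi>(1) by (auto simp: Inj_def)
    then show "x (i, \<pi> i) \<le> Max ((\<lambda>j. x (i, j)) ` C)" using assms(2) by (intro Max_ge) auto
  qed
qed

lemma assignment_max_Aval: "assignment_max n x = Aval {..<n} {..<n} x"
proof -
  have "(\<lambda>\<pi>. \<Sum>i<n. x (i, \<pi> i)) ` {\<pi>. \<pi> permutes {..<n}} = (\<lambda>\<pi>. \<Sum>i<n. x (i, \<pi> i)) ` Inj {..<n} {..<n}"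
  proof (intro equalityI subsetI)
    fix v assume "v \<in> (\<lambda>\<pi>. \<Sum>i<n. x (i, \<pi> i)) ` {\<pi>. \<pi> permutes {..<n}}"
    then obtain \<pi> where \<pi>: "\<pi> permutes {..<n}" "v = (\<Sum>i<n. x (i, \<pi> i))" by auto
    have "restrict \<pi> {..<n} \<in> Inj {..<n} {..<n}"
    proof -
      have a: "\<pi> i < n" if "i < n" for i using permutes_in_image[OF \<pi>(1), of i] that by simp
      have b: "inj \<pi>" by (rule permutes_inj[OF \<pi>(1)])
      show ?thesis unfolding Inj_def using a b by (auto simp: inj_on_def inj_def)
    qed
    moreover have "v = (\<Sum>i<n. x (i, restrict \<pi> {..<n} i))" using \<pi>(2) by simp
    ultimately show "v \<in> (\<lambda>\<pi>. \<Sum>i<n. x (i, \<pi> i)) ` Inj {..<n} {..<n}" by blast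
  next
    fix v assume "v \<in> (\<lambda>\<pi>. \<Sum>i<n. x (i, \<pi> i)) ` Inj {..<n} {..<n}"
    then obtain \<pi> where \<pi>: "\<pi> \<in> Inj {..<n} {..<n}" "v = (\<Sum>i<n. x (i, \<pi> i))" by auto
    define \<sigma> where "\<sigma> i = (if i < n then \<pi> i else i)" for i
    have bij: "bij_betw \<sigma> {..<n} {..<n}"
    proof -
      have "inj_on \<sigma> {..<n}" using \<pi>(1) by (auto simp: Inj_def inj_on_def \<sigma>_def)
      moreover have "\<sigma> ` {..<n} \<subseteq> {..<n}" using \<pi>(1) by (auto simp: Inj_def \<sigma>_def)
      ultimately show ?thesis by (simp add: bij_betw_def endo_inj_surj)
    qed
    have "\<sigma> permutes {..<n}" by (rule bij_imp_permutes[OF bij]) (auto simp: \<sigma>_def)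
    moreover have "v = (\<Sum>i<n. x (i, \<sigma> i))" using \<pi>(2) by (simp add: \<sigma>_def)
    ultimately show "v \<in> (\<lambda>\<pi>. \<Sum>i<n. x (i, \<pi> i)) ` {\<pi>. \<pi> permutes {..<n}}" by blast
  qed
  then show ?thesis by (simp add: assignment_max_def Aval_def)
qed



context tq
begin

interpretation prob_space P by (rule ps)

lemma Aval_meas:
  assumes "finite R" "finite C" "R \<times> C \<subseteq> J"
  shows "Aval R C \<in> borel_measurable (PiM J (\<lambda>_. P))"
proof -
  have "(\<lambda>x. Max ((\<lambda>\<pi>. (\<lambda>x. \<Sum>i\<in>R. x (i, \<pi> i)) x) ` Inj R C)) \<in> borel_measurable (PiM J (\<lambda>_. P))"
  proof (rule borel_measurable_Max[OF Inj_finite[OF assms(1,2)]])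
    fix \<pi> assume "\<pi> \<in> Inj R C"
    then have "(i, \<pi> i) \<in> J" if "i \<in> R" for i using assms(3) that by (auto simp: Inj_def)
    then show "(\<lambda>x. \<Sum>i\<in>R. x (i, \<pi> i)) \<in> borel_measurable (PiM J (\<lambda>_. P))"
      by (intro borel_measurable_sum comp_meas)
  qed
  then show ?thesis by (simp add: Aval_def[abs_def])
qed

lemma Aval_integrable:
  assumes "finite R" "finite C" "card R \<le> card C" "finite J" "R \<times> C \<subseteq> J"
  shows "integrable (PiM J (\<lambda>_. P)) (Aval R C)"
  by (rule int_bound[where c=0, OF assms(4) Aval_meas[OF assms(1,2,5)]]) (use Aval_abs[OF assms] in auto)


lemma greedy:
  fixes L :: "nat \<Rightarrow> real"
  assumes HL: "\<And>I :: (nat \<times> nat) set. finite I \<Longrightarrow> I \<noteq> {} \<Longrightarrow>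
      integral\<^sup>L (PiM I (\<lambda>_. P)) (\<lambda>x. Max (x ` I)) \<ge> L (card I)"
  assumes "finite R"
  shows "finite C \<Longrightarrow> finite J \<Longrightarrow> R \<times> C \<subseteq> J \<Longrightarrow> card R \<le> card C \<Longrightarrow>
     integral\<^sup>L (PiM J (\<lambda>_. P)) (Aval R C) \<ge> (\<Sum>k<card R. L (card C - k))"
  using assms(2)
proof (induction R arbitrary: C J rule: finite_induct)
  case empty
  then show ?case by (simp add: Aval_empty)
next
  case (insert r R)
  define I1 where "I1 = {r} \<times> C"
  define J' where "J' = J - I1"
  have C_ne: "C \<noteq> {}" using insert by auto
  have fin: "finite I1" "finite J'" using insert by (auto simp: I1_def J'_def)
  have disj: "I1 \<inter> J' = {}" by (auto simp: J'_def)
  have JU: "J = I1 \<union> J'" using insert.prems(3) by (auto simp: I1_def J'_def)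
  have cardR: "card R < card C" using insert by simp
  interpret PS: product_prob_space "\<lambda>_::nat\<times>nat. P" by (rule PP)
  interpret I: finite_product_sigma_finite "\<lambda>_::nat\<times>nat. P" I1 by standard fact
  interpret J: finite_product_sigma_finite "\<lambda>_::nat\<times>nat. P" J' by standard fact
  interpret PR: pair_sigma_finite "PiM I1 (\<lambda>_::nat\<times>nat. P)" "PiM J' (\<lambda>_::nat\<times>nat. P)" ..
  let ?f = "Aval (insert r R) C"
  have fmeas: "?f \<in> borel_measurable (PiM (I1 \<union> J') (\<lambda>_. P))"
    by (rule Aval_meas) (use insert JU in auto)
  have fint: "integrable (PiM (I1 \<union> J') (\<lambda>_. P)) ?f"
    by (rule Aval_integrable) (use insert JU fin in auto)
  have eq: "integral\<^sup>L (PiM J (\<lambda>_. P)) ?f =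
      (\<integral>y. (\<integral>z. ?f (merge I1 J' (y, z)) \<partial>PiM J' (\<lambda>_. P)) \<partial>PiM I1 (\<lambda>_. P))"
    using PS.product_integral_fold[OF disj fin fint] JU by simp
  define S where "S = (\<Sum>k<card R. L (card C - 1 - k))"
  have inner: "(\<integral>z. ?f (merge I1 J' (y, z)) \<partial>PiM J' (\<lambda>_. P)) \<ge> Max (y ` I1) + S"
    if y: "y \<in> space (PiM I1 (\<lambda>_. P))" for y
  proof -
    have "Max (y ` I1) \<in> y ` I1" using fin C_ne by (intro Max_in) (auto simp: I1_def)
    then obtain j where j: "j \<in> C" "y (r, j) = Max (y ` I1)" by (auto simp: I1_def)
    have mm: "(\<lambda>z. merge I1 J' (y, z)) \<in> PiM J' (\<lambda>_. P) \<rightarrow>\<^sub>M PiM (I1 \<union> J') (\<lambda>_. P)"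
      by (rule measurable_Pair2[OF measurable_merge y])
    have i1: "integrable (PiM J' (\<lambda>_. P)) (\<lambda>z. ?f (merge I1 J' (y, z)))"
    proof (rule int_bound[where c = "\<Sum>i\<in>I1. \<bar>y i\<bar>"])
      show "finite J'" by fact
      show "(\<lambda>z. ?f (merge I1 J' (y, z))) \<in> borel_measurable (PiM J' (\<lambda>_. P))"
        by (rule measurable_compose[OF mm fmeas])
      fix z assume z: "z \<in> space (PiM J' (\<lambda>_. P))"
      have "\<bar>?f (merge I1 J' (y, z))\<bar> \<le> (\<Sum>i\<in>I1 \<union> J'. \<bar>merge I1 J' (y, z) i\<bar>)"
        by (rule Aval_abs) (use insert JU fin in auto)
      also have "\<dots> = (\<Sum>i\<in>I1. \<bar>merge I1 J' (y, z) i\<bar>) + (\<Sum>i\<in>J'. \<bar>merge I1 J' (y, z) i\<bar>)"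
        by (rule sum.union_disjoint) (use fin disj in auto)
      also have "(\<Sum>i\<in>I1. \<bar>merge I1 J' (y, z) i\<bar>) = (\<Sum>i\<in>I1. \<bar>y i\<bar>)"
        by (intro sum.cong) (auto simp: merge_def)
      also have "(\<Sum>i\<in>J'. \<bar>merge I1 J' (y, z) i\<bar>) = (\<Sum>i\<in>J'. \<bar>z i\<bar>)"
        using disj by (intro sum.cong) (auto simp: merge_def)
      finally show "\<bar>?f (merge I1 J' (y, z))\<bar> \<le> (\<Sum>i\<in>I1. \<bar>y i\<bar>) + (\<Sum>i\<in>J'. \<bar>z i\<bar>)" .
    qed
    have sub': "R \<times> (C - {j}) \<subseteq> J'" using insert.prems(3) insert.hyps(2) by (auto simp: J'_def I1_def)
    have cc: "card R \<le> card (C - {j})" using cardR j(1) insert.prems(1) by simp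
    have i2int: "integrable (PiM J' (\<lambda>_. P)) (Aval R (C - {j}))"
      by (rule Aval_integrable) (use insert.hyps(1) insert.prems(1) cc fin sub' in auto)
    have i2: "integrable (PiM J' (\<lambda>_. P)) (\<lambda>z. y (r, j) + Aval R (C - {j}) z)"
      by (intro Bochner_Integration.integrable_add const_integrable i2int)
    have pt: "y (r, j) + Aval R (C - {j}) z \<le> ?f (merge I1 J' (y, z))" for z
    proof -
      have "?f (merge I1 J' (y, z)) \<ge> merge I1 J' (y, z) (r, j) + Aval R (C - {j}) (merge I1 J' (y, z))"
        by (rule Aval_step) (use insert.hyps insert.prems(1) j(1) cardR in auto)
      moreover have "merge I1 J' (y, z) (r, j) = y (r, j)" using j(1) by (simp add: merge_def I1_def)
      moreover have "Aval R (C - {j}) (merge I1 J' (y, z)) = Aval R (C - {j}) z"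
        by (rule Aval_cong) (use sub' disj in \<open>auto simp: merge_def\<close>)
      ultimately show ?thesis by simp
    qed
    have IH: "integral\<^sup>L (PiM J' (\<lambda>_. P)) (Aval R (C - {j})) \<ge> (\<Sum>k<card R. L (card (C - {j}) - k))"
      by (rule insert.IH) (use insert.prems(1) fin sub' cc in auto)
    have "card (C - {j}) = card C - 1" using j(1) insert.prems(1) by simp
    then have IH': "integral\<^sup>L (PiM J' (\<lambda>_. P)) (Aval R (C - {j})) \<ge> S" using IH by (simp add: S_def)
    have e1: "(\<integral>z. y (r, j) + Aval R (C - {j}) z \<partial>PiM J' (\<lambda>_. P)) = y (r, j) + integral\<^sup>L (PiM J' (\<lambda>_. P)) (Aval R (C - {j}))"
      using Bochner_Integration.integral_add[OF const_integrable i2int, of "y (r, j)"] prob_space.prob_space[OF psPi, of J'] by simp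
    have le: "(\<integral>z. y (r, j) + Aval R (C - {j}) z \<partial>PiM J' (\<lambda>_. P)) \<le> (\<integral>z. ?f (merge I1 J' (y, z)) \<partial>PiM J' (\<lambda>_. P))"
      by (rule integral_mono[OF i2 i1]) (rule pt)
    have "y (r, j) + integral\<^sup>L (PiM J' (\<lambda>_. P)) (Aval R (C - {j})) \<le> (\<integral>z. ?f (merge I1 J' (y, z)) \<partial>PiM J' (\<lambda>_. P))"
      using e1 le by simp
    then show ?thesis using IH' j(2) by simp
  qed
  have f_int': "integrable (PiM I1 (\<lambda>_. P) \<Otimes>\<^sub>M PiM J' (\<lambda>_. P)) (\<lambda>x. ?f (merge I1 J' x))"
    by (rule integrable_distr[OF measurable_merge]) (simp add: PS.distr_merge[OF disj fin] fint)
  have outer_int: "integrable (PiM I1 (\<lambda>_. P)) (\<lambda>y. \<integral>z. ?f (merge I1 J' (y, z)) \<partial>PiM J' (\<lambda>_. P))"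
    using PR.integrable_fst'[OF f_int'] by simp
  have I1ne: "I1 \<noteq> {}" using C_ne by (simp add: I1_def)
  have mint: "integrable (PiM I1 (\<lambda>_. P)) (\<lambda>y. Max (y ` I1) + S)"
    by (intro Bochner_Integration.integrable_add const_integrable Max_integrable fin I1ne)
  have "(\<integral>y. Max (y ` I1) + S \<partial>PiM I1 (\<lambda>_. P)) \<le> integral\<^sup>L (PiM J (\<lambda>_. P)) ?f"
    unfolding eq by (rule integral_mono[OF mint outer_int inner])
  moreover have "(\<integral>y. Max (y ` I1) + S \<partial>PiM I1 (\<lambda>_. P)) = integral\<^sup>L (PiM I1 (\<lambda>_. P)) (\<lambda>y. Max (y ` I1)) + S"
    using Bochner_Integration.integral_add[OF Max_integrable[OF fin(1) I1ne] const_integrable, of S] prob_space.prob_space[OF psPi, of I1] by simp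
  moreover have "integral\<^sup>L (PiM I1 (\<lambda>_. P)) (\<lambda>y. Max (y ` I1)) \<ge> L (card C)"
    using HL[OF fin(1) I1ne] by (simp add: I1_def card_cartesian_product_singleton)
  moreover have "(\<Sum>k<card (insert r R). L (card C - k)) = L (card C) + S"
  proof -
    have "card (insert r R) = Suc (card R)" using insert.hyps by simp
    then have "(\<Sum>k<card (insert r R). L (card C - k)) = L (card C - 0) + (\<Sum>k<card R. L (card C - Suc k))"
      by (simp only: sum.lessThan_Suc_shift)
    then show ?thesis by (simp add: S_def)
  qed
  ultimately show ?case by linarith
qed


definition etail where "etail t = integral\<^sup>L P (\<lambda>v. max (v - t) 0)"

lemma hint: "integrable P (\<lambda>v. max (v - t) 0)"
  by (intro integrable_max Bochner_Integration.integrable_diff intX) auto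

lemma sum_tail:
  fixes K :: "'i set"
  assumes "finite K" "K \<subseteq> J"
  shows "integrable (PiM J (\<lambda>_. P)) (\<lambda>x. c + (\<Sum>k\<in>K. max (x k - t) 0))"
    "integral\<^sup>L (PiM J (\<lambda>_. P)) (\<lambda>x. c + (\<Sum>k\<in>K. max (x k - t) 0)) = c + card K * etail t"
proof -
  have ik: "integrable (PiM J (\<lambda>_. P)) (\<lambda>x. max (x k - t) 0)" if "k \<in> K" for k
    using comp_integrable[OF _ hint, of k J t] that assms(2) by auto
  have isum: "integrable (PiM J (\<lambda>_. P)) (\<lambda>x. \<Sum>k\<in>K. max (x k - t) 0)"
    by (intro Bochner_Integration.integrable_sum ik)
  show "integrable (PiM J (\<lambda>_. P)) (\<lambda>x. c + (\<Sum>k\<in>K. max (x k - t) 0))"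
    by (intro Bochner_Integration.integrable_add const_integrable isum)
  have "integral\<^sup>L (PiM J (\<lambda>_. P)) (\<lambda>x. c + (\<Sum>k\<in>K. max (x k - t) 0))
      = c + integral\<^sup>L (PiM J (\<lambda>_. P)) (\<lambda>x. \<Sum>k\<in>K. max (x k - t) 0)"
    using Bochner_Integration.integral_add[OF const_integrable isum, of c] prob_space.prob_space[OF psPi, of J] by simp
  also have "integral\<^sup>L (PiM J (\<lambda>_. P)) (\<lambda>x. \<Sum>k\<in>K. max (x k - t) 0) = (\<Sum>k\<in>K. integral\<^sup>L (PiM J (\<lambda>_. P)) (\<lambda>x. max (x k - t) 0))"
    by (rule Bochner_Integration.integral_sum) (rule ik)
  also have "\<dots> = (\<Sum>k\<in>K. etail t)"
  proof (rule sum.cong[OF refl])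
    fix k assume "k \<in> K"
    then show "integral\<^sup>L (PiM J (\<lambda>_. P)) (\<lambda>x. max (x k - t) 0) = etail t"
      using comp_integral[of k J "\<lambda>v. max (v - t) 0"] hint[of t] assms(2) by (auto simp: etail_def)
  qed
  finally show "integral\<^sup>L (PiM J (\<lambda>_. P)) (\<lambda>x. c + (\<Sum>k\<in>K. max (x k - t) 0)) = c + card K * etail t" by simp
qed

lemma Max_le_tail: assumes "finite I" "I \<noteq> {}"
  shows "Max (f ` I) \<le> t + (\<Sum>i\<in>I. max (f i - t) (0::real))"
proof -
  have "Max (f ` I) \<in> f ` I" using assms by (intro Max_in) auto
  then obtain j where j: "j \<in> I" "Max (f ` I) = f j" by auto
  have "max (f j - t) 0 \<le> (\<Sum>i\<in>I. max (f i - t) 0)"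
    by (rule member_le_sum[OF j(1)]) (use assms in auto)
  then show ?thesis using j(2) by linarith
qed

lemma upper_max:
  fixes I :: "'i set"
  assumes "finite I" "I \<noteq> {}"
  shows "integral\<^sup>L (PiM I (\<lambda>_. P)) (\<lambda>x. Max (x ` I)) \<le> t + card I * etail t"
proof -
  have "integral\<^sup>L (PiM I (\<lambda>_. P)) (\<lambda>x. Max (x ` I)) \<le> integral\<^sup>L (PiM I (\<lambda>_. P)) (\<lambda>x. t + (\<Sum>k\<in>I. max (x k - t) 0))"
    by (rule integral_mono[OF Max_integrable[OF assms] sum_tail(1)[OF assms(1) order.refl]])
      (rule Max_le_tail[OF assms])
  then show ?thesis using sum_tail(2)[OF assms(1) order.refl] by simp
qed

lemma upper_assign:
  assumes "n > 0"
  shows "integral\<^sup>L (PiM ({..<n} \<times> {..<n}) (\<lambda>_. P)) (assignment_max n) \<le> n * t + n^2 * etail t"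
proof -
  let ?K = "{..<n} \<times> {..<n} :: (nat \<times> nat) set"
  have pw: "assignment_max n x \<le> n * t + (\<Sum>k\<in>?K. max (x k - t) 0)" for x
  proof -
    have "assignment_max n x \<le> (\<Sum>i<n. Max ((\<lambda>j. x (i, j)) ` {..<n}))"
      unfolding assignment_max_Aval by (rule Aval_upper) (use assms in auto)
    also have "\<dots> \<le> (\<Sum>i<n. t + (\<Sum>j<n. max (x (i, j) - t) 0))"
      by (intro sum_mono Max_le_tail) (use assms in auto)
    also have "\<dots> = n * t + (\<Sum>i<n. \<Sum>j<n. max (x (i, j) - t) 0)"
      by (simp add: sum.distrib)
    also have "(\<Sum>i<n. \<Sum>j<n. max (x (i, j) - t) 0) = (\<Sum>k\<in>?K. max (x k - t) 0)"
      by (simp add: sum.cartesian_product)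
    finally show ?thesis .
  qed
  have ai: "integrable (PiM ?K (\<lambda>_. P)) (assignment_max n)"
    unfolding assignment_max_Aval[abs_def]
    by (rule Aval_integrable) auto
  have "integral\<^sup>L (PiM ?K (\<lambda>_. P)) (assignment_max n) \<le> integral\<^sup>L (PiM ?K (\<lambda>_. P)) (\<lambda>x. n * t + (\<Sum>k\<in>?K. max (x k - t) 0))"
    by (rule integral_mono[OF ai sum_tail(1)]) (use pw in auto)
  then show ?thesis using sum_tail(2)[of ?K ?K "n * t" t] by (simp add: card_cartesian_product power2_eq_square)
qed

end


lemma pow_exp:
  fixes b :: real
  assumes "0 < m" "0 \<le> b" "b \<le> real m" "m \<le> c"
  shows "(1 - b / m) ^ c \<le> exp (- b)"
proof -
  have q: "0 \<le> 1 - b / m" "1 - b / m \<le> 1" using assms by (auto simp: field_simps)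
  have "(1 - b / m) ^ c \<le> (1 - b / m) ^ m" by (rule power_decreasing[OF assms(4) q])
  also have "\<dots> \<le> exp (- b / m) ^ m"
    by (rule power_mono[OF _ q(1)]) (use exp_ge_add_one_self[of "- b / m"] in simp)
  also have "\<dots> = exp (real m * (- b / m))" by (rule exp_of_nat_mult[symmetric])
  also have "\<dots> = exp (- b)" using assms(1) by simp
  finally show ?thesis .
qed

lemma ratio_lim:
  fixes f h :: "nat \<Rightarrow> real"
  assumes pos: "eventually (\<lambda>n. h n > 0) sequentially"
    and up: "\<And>e. e > 0 \<Longrightarrow> eventually (\<lambda>n. f n \<le> (1 + e) * h n) sequentially"
    and lo: "\<And>e. e > 0 \<Longrightarrow> eventually (\<lambda>n. f n \<ge> (1 - e) * h n) sequentially"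
  shows "f \<sim>[sequentially] h"
proof (rule asymp_equivI')
  show "((\<lambda>n. f n / h n) \<longlongrightarrow> 1) sequentially"
  proof (rule tendstoI)
    fix e :: real assume e: "e > 0"
    have "eventually (\<lambda>n. h n > 0 \<and> f n \<le> (1 + e/2) * h n \<and> f n \<ge> (1 - e/2) * h n) sequentially"
    proof -
      have "eventually (\<lambda>n. f n \<le> (1 + e/2) * h n) sequentially" using up e by simp
      moreover have "eventually (\<lambda>n. f n \<ge> (1 - e/2) * h n) sequentially" using lo e by simp
      ultimately show ?thesis using pos by eventually_elim auto
    qed
    then show "eventually (\<lambda>n. dist (f n / h n) 1 < e) sequentially"
    proof (rule eventually_mono)
      fix n assume n: "h n > 0 \<and> f n \<le> (1 + e/2) * h n \<and> f n \<ge> (1 - e/2) * h n"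
      then have "f n / h n \<le> 1 + e/2" "f n / h n \<ge> 1 - e/2"
        by (auto simp: divide_simps)
      then show "dist (f n / h n) 1 < e" using e by (auto simp: dist_real_def abs_if)
    qed
  qed
qed

context tq2
begin

interpretation prob_space P by (rule ps)

lemma lower1:
  assumes "n > 0" "b > 0" "b < real n" "g (b / n) \<ge> 1"
  shows "integral\<^sup>L (PiM {..<n} (\<lambda>_. P)) (sample_max n) \<ge> (g (b / n) - 1) * (1 - exp (- b)) - integral\<^sup>L P abs"
proof -
  have q: "0 < b / n" "b / n < 1" using assms by auto
  have m: "measure P {g (b / n) - 1..} \<ge> b / n"
    using g_lower[OF q(2), of "g (b / n) - 1"] by simp
  have "integral\<^sup>L (PiM {..<n} (\<lambda>_. P)) (\<lambda>x. Max (x ` {..<n})) \<ge> (g (b / n) - 1) * (1 - (1 - b / n) ^ card {..<n}) - integral\<^sup>L P abs"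
    by (rule Max_lower) (use assms q m in \<open>auto simp: lessThan_empty_iff\<close>)
  moreover have "(1 - b / n) ^ card {..<n} \<le> exp (- b)" using pow_exp[of n b n] assms by simp
  then have "(g (b / n) - 1) * (1 - exp (- b)) \<le> (g (b / n) - 1) * (1 - (1 - b / n) ^ card {..<n})"
    using assms(4) by (intro mult_left_mono) auto
  ultimately show ?thesis by (simp add: sample_max_def[abs_def])
qed

lemma lower2:
  assumes "m > 0" "m \<le> n" "b > 0" "b < real m" "g (b / m) \<ge> 1"
  shows "integral\<^sup>L (PiM ({..<n} \<times> {..<n}) (\<lambda>_. P)) (assignment_max n)
     \<ge> (real n - real m) * ((g (b / m) - 1) * (1 - exp (- b))) - n * integral\<^sup>L P abs"
proof -
  define \<beta> where "\<beta> = (g (b / m) - 1) * (1 - exp (- b))"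
  have \<beta>0: "\<beta> \<ge> 0" unfolding \<beta>_def using assms by (intro mult_nonneg_nonneg) auto
  define L where "L c = (if c \<ge> m then \<beta> else 0) - integral\<^sup>L P abs" for c
  have q: "0 < b / m" "b / m < 1" using assms by auto
  have mm: "measure P {g (b / m) - 1..} \<ge> b / m"
    using g_lower[OF q(2), of "g (b / m) - 1"] by simp
  have HL: "integral\<^sup>L (PiM I (\<lambda>_. P)) (\<lambda>x. Max (x ` I)) \<ge> L (card I)"
    if I: "finite I" "I \<noteq> {}" for I :: "(nat \<times> nat) set"
  proof (cases "card I \<ge> m")
    case True
    have "integral\<^sup>L (PiM I (\<lambda>_. P)) (\<lambda>x. Max (x ` I)) \<ge> (g (b / m) - 1) * (1 - (1 - b / m) ^ card I) - integral\<^sup>L P abs"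
      by (rule Max_lower) (use assms q mm I in auto)
    moreover have "(1 - b / m) ^ card I \<le> exp (- b)" using pow_exp[of m b "card I"] assms True by simp
    then have "\<beta> \<le> (g (b / m) - 1) * (1 - (1 - b / m) ^ card I)"
      unfolding \<beta>_def using assms(5) by (intro mult_left_mono) auto
    ultimately show ?thesis using True by (simp add: L_def)
  next
    case False
    have "integral\<^sup>L (PiM I (\<lambda>_. P)) (\<lambda>x. Max (x ` I)) \<ge> 0 * (1 - (1 - 0) ^ card I) - integral\<^sup>L P abs"
      by (rule Max_lower) (use I in auto)
    then show ?thesis using False by (simp add: L_def)
  qed
  have "integral\<^sup>L (PiM ({..<n} \<times> {..<n}) (\<lambda>_. P)) (Aval {..<n} {..<n}) \<ge> (\<Sum>k<card {..<n}. L (card {..<n} - k))"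
    by (rule greedy[OF HL]) auto
  moreover have "(\<Sum>k<n. L (n - k)) \<ge> (real n - real m) * \<beta> - n * integral\<^sup>L P abs"
  proof -
    have "(\<Sum>k<n. L (n - k)) = (\<Sum>k<n. (if n - k \<ge> m then \<beta> else 0)) - n * integral\<^sup>L P abs"
      by (simp add: L_def sum_subtractf)
    moreover have "(\<Sum>k<n. (if n - k \<ge> m then \<beta> else 0)) \<ge> (\<Sum>k<n - m. (if n - k \<ge> m then \<beta> else 0))"
      by (rule sum_mono2) (use \<beta>0 in auto)
    moreover have "(\<Sum>k<n - m. (if n - k \<ge> m then \<beta> else 0)) = (\<Sum>k<n - m. \<beta>)"
      by (rule sum.cong) auto
    moreover have "(\<Sum>k<n - m. \<beta>) = (real n - real m) * \<beta>" using assms(2) by (simp add: of_nat_diff)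
    ultimately show ?thesis by linarith
  qed
  ultimately show ?thesis unfolding assignment_max_Aval[abs_def] \<beta>_def by simp
qed


definition G where "G n = g (1 / real n)"

lemma inv_n: "filterlim (\<lambda>n::nat. 1 / real n) (at_right 0) sequentially"
proof (rule tendsto_imp_filterlim_at_right[OF lim_1_over_n])
  show "\<forall>\<^sub>F n in sequentially. 1 / real n > 0"
    unfolding eventually_sequentially by (intro exI[of _ 1]) auto
qed

lemma G_inf: "filterlim G at_top sequentially"
  unfolding G_def[abs_def] using filterlim_compose[OF gInf' inv_n] by (simp add: o_def)

lemma G_ev: "eventually (\<lambda>n. G n \<ge> C) sequentially"
  using G_inf by (simp add: filterlim_at_top)

lemma ratio: assumes "c > 0" shows "((\<lambda>n. g (c / real n) / G n) \<longlongrightarrow> 1) sequentially"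
  using filterlim_compose[OF sv'[OF assms] inv_n] by (simp add: G_def o_def)

lemma ratio_up: assumes "c > 0" "e > 0" shows "eventually (\<lambda>n. g (c / real n) \<le> (1 + e) * G n) sequentially"
proof -
  have "eventually (\<lambda>n. g (c / real n) / G n < 1 + e) sequentially"
    using ratio[OF assms(1)] by (rule order_tendstoD) (use assms in auto)
  moreover have "eventually (\<lambda>n. G n \<ge> 1) sequentially" by (rule G_ev)
  ultimately show ?thesis
    by eventually_elim (auto simp: divide_simps split: if_splits)
qed

lemma ratio_lo: assumes "c > 0" "e > 0" shows "eventually (\<lambda>n. g (c / real n) \<ge> (1 - e) * G n) sequentially"
proof -
  have "eventually (\<lambda>n. g (c / real n) / G n > 1 - e) sequentially"
    using ratio[OF assms(1)] by (rule order_tendstoD) (use assms in auto)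
  moreover have "eventually (\<lambda>n. G n \<ge> 1) sequentially" by (rule G_ev)
  ultimately show ?thesis
    by eventually_elim (auto simp: divide_simps split: if_splits)
qed

lemma small_ev: assumes "c > 0" "d > 0" shows "eventually (\<lambda>n. c / real n < d \<and> n > 0) sequentially"
proof -
  have "eventually (\<lambda>n. c / real n < d) sequentially"
    using tendsto_mult[OF tendsto_const[of c] lim_1_over_n] assms
    by (intro order_tendstoD(2)) (auto simp: divide_inverse)
  moreover have "eventually (\<lambda>n. n > (0::nat)) sequentially" by (rule eventually_gt_at_top)
  ultimately show ?thesis by eventually_elim auto
qed


lemma core_up:
  assumes "\<epsilon> > 0"
  shows "eventually (\<lambda>n. n > 0 \<and> (\<exists>t. t + real n * etail t \<le> (1 + \<epsilon>) * G n)) sequentially"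
proof -
  define a where "a = min (1/4) (\<epsilon>/7)"
  have a: "a > 0" "a \<le> 1/4" "7 * a \<le> \<epsilon>" using assms by (auto simp: a_def)
  have ev1: "eventually (\<lambda>n. a / real n < q0 \<and> n > 0) sequentially" by (rule small_ev) (use a q0 in auto)
  have ev2: "eventually (\<lambda>n. g (a / real n) \<le> (1 + a) * G n) sequentially" by (rule ratio_up) (use a in auto)
  have ev3: "eventually (\<lambda>n. G n \<ge> (1 + 2 * a) / a) sequentially" by (rule G_ev)
  show ?thesis using ev1 ev2 ev3
  proof eventually_elim
    case (elim n)
    define p where "p = a / real n"
    have p: "0 < p" "p < q0" using elim a by (auto simp: p_def)
    have gp: "g p > 0" using q0(3)[OF p] .
    have np: "real n * p = a" using elim by (simp add: p_def)
    have Gpos: "G n > 0" using elim(3) a by (smt (verit) divide_pos_pos)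
    have aG: "1 + 2 * a \<le> a * G n" using elim(3) a by (simp add: divide_le_eq mult.commute)
    have tb: "etail (g p + 1) \<le> p * (4 * g p + 2)" using tail_bound[OF p] by (simp add: etail_def)
    have "real n * etail (g p + 1) \<le> real n * (p * (4 * g p + 2))" by (rule mult_left_mono[OF tb]) simp
    also have "\<dots> = a * (4 * g p + 2)" using np by (simp add: mult.assoc[symmetric])
    finally have t1: "real n * etail (g p + 1) \<le> a * (4 * g p + 2)" .
    have "(1 + 4 * a) * g p \<le> (1 + 4 * a) * ((1 + a) * G n)"
      using elim(2) a by (intro mult_left_mono) (auto simp: p_def)
    moreover have "(1 + 4 * a) * ((1 + a) * G n) \<le> (1 + 6 * a) * G n"
    proof -
      have "4 * a * a \<le> a" using a by (simp add: mult_le_cancel_right1)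
      then have "(1 + 4 * a) * (1 + a) \<le> 1 + 6 * a" by (simp add: algebra_simps)
      then show ?thesis using Gpos by (simp add: mult.assoc[symmetric] mult_right_mono)
    qed
    moreover have "(1 + 7 * a) * G n \<le> (1 + \<epsilon>) * G n" using a Gpos by (intro mult_right_mono) auto
    ultimately have "g p + 1 + real n * etail (g p + 1) \<le> (1 + \<epsilon>) * G n"
      using t1 aG by (simp add: algebra_simps)
    then show ?case using elim by blast
  qed
qed


lemma core_lo1:
  assumes "\<epsilon> > 0" "\<epsilon> \<le> 1"
  shows "eventually (\<lambda>n. integral\<^sup>L (PiM {..<n} (\<lambda>_. P)) (sample_max n) \<ge> (1 - \<epsilon>) * G n) sequentially"
proof -
  define \<delta> where "\<delta> = \<epsilon> / 3"
  define b where "b = - ln \<delta>"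
  define EA where "EA = integral\<^sup>L P abs"
  have EA: "EA \<ge> 0" unfolding EA_def by simp
  have d: "0 < \<delta>" "\<delta> \<le> 1/3" using assms by (auto simp: \<delta>_def)
  have b: "b > 0" "exp (- b) = \<delta>" using d by (auto simp: b_def)
  have ev1: "eventually (\<lambda>n. b / real n < 1 \<and> n > 0) sequentially" by (rule small_ev) (use b in auto)
  have ev2: "eventually (\<lambda>n. g (b / real n) \<ge> (1 - \<delta>) * G n) sequentially" by (rule ratio_lo) (use b d in auto)
  have ev3: "eventually (\<lambda>n. G n \<ge> max 2 ((1 + EA) / \<delta>)) sequentially" by (rule G_ev)
  show ?thesis using ev1 ev2 ev3
  proof eventually_elim
    case (elim n)
    have G2: "G n \<ge> 2" using elim(3) by simp
    have GE: "1 + EA \<le> \<delta> * G n" using elim(3) d by (simp add: divide_le_eq mult.commute)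
    have bn: "b < real n" using elim(1) by (auto simp: divide_less_eq)
    have "(1 - \<delta>) * G n \<ge> (2/3) * 2" using G2 d by (intro mult_mono) auto
    then have g1: "g (b / real n) \<ge> 1" using elim(2) by linarith
    have L: "integral\<^sup>L (PiM {..<n} (\<lambda>_. P)) (sample_max n) \<ge> (g (b / n) - 1) * (1 - \<delta>) - EA"
      using lower1[OF _ b(1) bn g1] elim(1) b(2) by (simp add: EA_def)
    have "(g (b / n) - 1) * (1 - \<delta>) \<ge> (1 - \<delta>) * g (b / n) - 1" using d by (simp add: algebra_simps)
    moreover have "(1 - \<delta>) * g (b / n) \<ge> (1 - \<delta>) * ((1 - \<delta>) * G n)"
      using elim(2) d by (intro mult_left_mono) auto
    moreover have "(1 - \<delta>) * ((1 - \<delta>) * G n) \<ge> (1 - 2 * \<delta>) * G n"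
    proof -
      have "(1 - \<delta>) * (1 - \<delta>) \<ge> 1 - 2 * \<delta>" by (simp add: algebra_simps)
      then show ?thesis using G2 by (simp add: mult.assoc[symmetric] mult_right_mono)
    qed
    ultimately have "integral\<^sup>L (PiM {..<n} (\<lambda>_. P)) (sample_max n) \<ge> (1 - 2 * \<delta>) * G n - 1 - EA" using L by linarith
    moreover have "(1 - 2 * \<delta>) * G n - 1 - EA \<ge> (1 - \<epsilon>) * G n" using GE by (simp add: \<delta>_def algebra_simps)
    ultimately show ?case by linarith
  qed
qed


lemma core_lo2:
  assumes "\<epsilon> > 0" "\<epsilon> \<le> 1"
  shows "eventually (\<lambda>n. integral\<^sup>L (PiM ({..<n} \<times> {..<n}) (\<lambda>_. P)) (assignment_max n) \<ge> (1 - \<epsilon>) * (real n * G n)) sequentially"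
proof -
  define \<delta> where "\<delta> = \<epsilon> / 4"
  define b where "b = - ln \<delta>"
  define K where "K = nat \<lceil>1 / \<delta>\<rceil>"
  define EA where "EA = integral\<^sup>L P abs"
  have EA: "EA \<ge> 0" unfolding EA_def by simp
  have d: "0 < \<delta>" "\<delta> \<le> 1/4" using assms by (auto simp: \<delta>_def)
  have b: "b > 0" "exp (- b) = \<delta>" using d by (auto simp: b_def)
  have K: "real K \<ge> 1 / \<delta>" unfolding K_def by linarith
  have "1 / \<delta> \<ge> 4" using d by (simp add: le_divide_eq)
  then have "real K \<ge> 4" using K by linarith
  then have K1: "K \<ge> 1" by (cases K) auto
  have Kd: "1 / real K \<le> \<delta>" using K d K1 by (simp add: divide_le_eq mult.commute)
  define c where "c = 2 * b * real K"
  have c: "c > 0" using b K1 by (simp add: c_def)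
  have ev0: "eventually (\<lambda>n. n \<ge> 2 * K) sequentially" by (rule eventually_ge_at_top)
  have ev1: "eventually (\<lambda>n. c / real n < 1 \<and> n > 0) sequentially" by (rule small_ev) (use c in auto)
  have ev2: "eventually (\<lambda>n. g (c / real n) \<ge> (1 - \<delta>) * G n) sequentially" by (rule ratio_lo) (use c d in auto)
  have ev3: "eventually (\<lambda>n. G n \<ge> max 2 ((1 + EA) / \<delta>)) sequentially" by (rule G_ev)
  show ?thesis using ev0 ev1 ev2 ev3
  proof eventually_elim
    case (elim n)
    define m where "m = n div K"
    have G2: "G n \<ge> 2" using elim(4) by simp
    have GE: "1 + EA \<le> \<delta> * G n" using elim(4) d by (simp add: divide_le_eq mult.commute)
    have n0: "n > 0" using elim(2) by simp
    have m_up: "real m \<le> real n / real K" unfolding m_def by (rule of_nat_div_le_of_nat)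
    have "n < (m + 1) * K"
    proof -
      have e: "n div K * K + n mod K = n" by (rule div_mult_mod_eq)
      have "n mod K < K" using K1 by simp
      moreover have "(m + 1) * K = n div K * K + K" by (simp add: m_def distrib_right)
      ultimately show ?thesis using e by linarith
    qed
    then have "real n < (real m + 1) * real K" by (metis of_nat_1 of_nat_add of_nat_less_iff of_nat_mult)
    then have m_lo1: "real n / real K < real m + 1" using K1 by (simp add: divide_less_eq)
    have "real n / real K \<ge> 2" using elim(1) K1 by (simp add: le_divide_eq)
    moreover have "real n / (2 * real K) = (real n / real K) / 2" by simp
    ultimately have m_lo: "real m \<ge> real n / (2 * real K)" using m_lo1 by linarith
    have m0: "m > 0" using m_lo \<open>real n / real K \<ge> 2\<close> m_lo1 by (cases "m = 0") auto
    have mn: "m \<le> n" unfolding m_def by simp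
    have bm_le: "b / real m \<le> c / real n"
    proof -
      have "b / real m \<le> b / (real n / (2 * real K))"
        using m_lo b n0 K1 m0 by (intro divide_left_mono) (auto intro!: mult_pos_pos divide_pos_pos)
      also have "\<dots> = c / real n" by (simp add: c_def)
      finally show ?thesis .
    qed
    have cn: "c / real n < 1" using elim(2) by simp
    have bm: "0 < b / real m" "b / real m < 1" using b m0 apply simp using bm_le cn by linarith
    have bltm: "b < real m" using bm(2) m0 by (simp add: divide_less_eq)
    have gmono: "g (c / real n) \<le> g (b / real m)" by (rule g_mono) (use bm bm_le cn in auto)
    have "(1 - \<delta>) * G n \<ge> (3/4) * 2" using G2 d by (intro mult_mono) auto
    then have g1: "g (b / real m) \<ge> 1" using elim(3) gmono by linarith
    define \<beta> where "\<beta> = (g (b / m) - 1) * (1 - \<delta>)"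
    have L: "integral\<^sup>L (PiM ({..<n} \<times> {..<n}) (\<lambda>_. P)) (assignment_max n) \<ge> (real n - real m) * \<beta> - n * EA"
      using lower2[OF m0 mn b(1) bltm g1] b(2) by (simp add: EA_def \<beta>_def)
    have \<beta>0: "\<beta> \<ge> 0" unfolding \<beta>_def using g1 d by simp
    have "\<beta> \<ge> (1 - \<delta>) * g (b / m) - 1" using d by (simp add: \<beta>_def algebra_simps)
    moreover have "(1 - \<delta>) * g (b / m) \<ge> (1 - \<delta>) * ((1 - \<delta>) * G n)"
      using elim(3) gmono d by (intro mult_left_mono) auto
    moreover have "(1 - \<delta>) * ((1 - \<delta>) * G n) \<ge> (1 - 2 * \<delta>) * G n"
    proof -
      have "(1 - \<delta>) * (1 - \<delta>) \<ge> 1 - 2 * \<delta>" by (simp add: algebra_simps)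
      then show ?thesis using G2 by (simp add: mult.assoc[symmetric] mult_right_mono)
    qed
    ultimately have \<beta>lo: "\<beta> \<ge> (1 - 2 * \<delta>) * G n - 1" by linarith
    have nm: "real n - real m \<ge> real n * (1 - \<delta>)"
    proof -
      have "real n / real K = real n * (1 / real K)" by simp
      also have "\<dots> \<le> real n * \<delta>" using Kd by (intro mult_left_mono) auto
      finally have "real n / real K \<le> real n * \<delta>" .
      then show ?thesis using m_up by (simp add: algebra_simps)
    qed
    have "(real n - real m) * \<beta> \<ge> (real n * (1 - \<delta>)) * \<beta>" using nm \<beta>0 by (intro mult_right_mono) auto
    moreover have "(real n * (1 - \<delta>)) * \<beta> \<ge> (real n * (1 - \<delta>)) * ((1 - 2 * \<delta>) * G n - 1)"
      using \<beta>lo d by (intro mult_left_mono) auto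
    moreover have "(real n * (1 - \<delta>)) * ((1 - 2 * \<delta>) * G n - 1) - real n * EA \<ge> (1 - \<epsilon>) * (real n * G n)"
    proof -
      have "(1 - \<delta>) * (1 - 2 * \<delta>) \<ge> 1 - 3 * \<delta>" using d by (simp add: algebra_simps)
      then have "(1 - \<delta>) * (1 - 2 * \<delta>) * G n \<ge> (1 - 3 * \<delta>) * G n" using G2 by (intro mult_right_mono) auto
      then have "(1 - \<delta>) * ((1 - 2 * \<delta>) * G n - 1) - EA \<ge> (1 - 3 * \<delta>) * G n - 1 - EA"
        using d by (simp add: algebra_simps)
      also have "(1 - 3 * \<delta>) * G n - 1 - EA \<ge> (1 - \<epsilon>) * G n" using GE by (simp add: \<delta>_def algebra_simps)
      finally have "(1 - \<delta>) * ((1 - 2 * \<delta>) * G n - 1) - EA \<ge> (1 - \<epsilon>) * G n" by linarith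
      then have "real n * ((1 - \<delta>) * ((1 - 2 * \<delta>) * G n - 1) - EA) \<ge> real n * ((1 - \<epsilon>) * G n)"
        by (intro mult_left_mono) auto
      then show ?thesis by (simp add: algebra_simps)
    qed
    ultimately show ?case using L by linarith
  qed
qed


lemma main1: "(\<lambda>n. integral\<^sup>L (PiM {..<n} (\<lambda>_. P)) (sample_max n)) \<sim>[sequentially] G"
proof (rule ratio_lim)
  show "eventually (\<lambda>n. G n > 0) sequentially"
    using G_ev[of 1] by eventually_elim auto
next
  fix e :: real assume e: "e > 0"
  show "eventually (\<lambda>n. integral\<^sup>L (PiM {..<n} (\<lambda>_. P)) (sample_max n) \<le> (1 + e) * G n) sequentially"
    using core_up[OF e]
  proof eventually_elim
    case (elim n)
    then obtain t where t: "t + real n * etail t \<le> (1 + e) * G n" by blast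
    have "integral\<^sup>L (PiM {..<n} (\<lambda>_. P)) (\<lambda>x. Max (x ` {..<n})) \<le> t + card {..<n} * etail t"
      by (rule upper_max) (use elim in auto)
    then show ?case using t by (simp add: sample_max_def[abs_def])
  qed
next
  fix e :: real assume e: "e > 0"
  have "eventually (\<lambda>n. integral\<^sup>L (PiM {..<n} (\<lambda>_. P)) (sample_max n) \<ge> (1 - min e 1) * G n) sequentially"
    by (rule core_lo1) (use e in auto)
  then show "eventually (\<lambda>n. integral\<^sup>L (PiM {..<n} (\<lambda>_. P)) (sample_max n) \<ge> (1 - e) * G n) sequentially"
    using G_ev[of 1]
  proof eventually_elim
    case (elim n)
    have "(1 - e) * G n \<le> (1 - min e 1) * G n" using elim(2) by (intro mult_right_mono) auto
    then show ?case using elim(1) by linarith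
  qed
qed

lemma main2: "(\<lambda>n. integral\<^sup>L (PiM ({..<n} \<times> {..<n}) (\<lambda>_. P)) (assignment_max n)) \<sim>[sequentially] (\<lambda>n. real n * G n)"
proof (rule ratio_lim)
  show "eventually (\<lambda>n. real n * G n > 0) sequentially"
    using G_ev[of 1] eventually_gt_at_top[of 0] by eventually_elim auto
next
  fix e :: real assume e: "e > 0"
  show "eventually (\<lambda>n. integral\<^sup>L (PiM ({..<n} \<times> {..<n}) (\<lambda>_. P)) (assignment_max n) \<le> (1 + e) * (real n * G n)) sequentially"
    using core_up[OF e]
  proof eventually_elim
    case (elim n)
    then obtain t where t: "t + real n * etail t \<le> (1 + e) * G n" by blast
    have "integral\<^sup>L (PiM ({..<n} \<times> {..<n}) (\<lambda>_. P)) (assignment_max n) \<le> real n * t + real n ^ 2 * etail t"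
      using upper_assign[of n t] elim by simp
    also have "\<dots> = real n * (t + real n * etail t)" by (simp add: algebra_simps power2_eq_square)
    also have "\<dots> \<le> real n * ((1 + e) * G n)" using t by (intro mult_left_mono) auto
    finally show ?case by (simp add: algebra_simps)
  qed
next
  fix e :: real assume e: "e > 0"
  have "eventually (\<lambda>n. integral\<^sup>L (PiM ({..<n} \<times> {..<n}) (\<lambda>_. P)) (assignment_max n) \<ge> (1 - min e 1) * (real n * G n)) sequentially"
    by (rule core_lo2) (use e in auto)
  then show "eventually (\<lambda>n. integral\<^sup>L (PiM ({..<n} \<times> {..<n}) (\<lambda>_. P)) (assignment_max n) \<ge> (1 - e) * (real n * G n)) sequentially"
    using G_ev[of 1]
  proof eventually_elim
    case (elim n)
    have "(1 - e) * (real n * G n) \<le> (1 - min e 1) * (real n * G n)" using elim(2) by (intro mult_right_mono) auto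
    then show ?case using elim(1) by linarith
  qed
qed

end

theorem theorem1:
  fixes P :: "real measure"
  assumes "prob_space P"
    and "sets P = sets borel"
    and "integrable P (\<lambda>x. x)"
    and "filterlim (tail_quantile P) at_top (at_right 0)"
    and "\<And>c. c > 0 \<Longrightarrow>
           ((\<lambda>p. tail_quantile P (c * p) / tail_quantile P p) \<longlongrightarrow> 1) (at_right 0)"
  shows "(\<lambda>n. integral\<^sup>L (PiM {..<n} (\<lambda>_. P)) (sample_max n))
           \<sim>[sequentially] (\<lambda>n. tail_quantile P (1 / real n))
       \<and> (\<lambda>n. integral\<^sup>L (PiM ({..<n} \<times> {..<n}) (\<lambda>_. P)) (assignment_max n))
           \<sim>[sequentially] (\<lambda>n. real n * tail_quantile P (1 / real n))"
proof -
  interpret T: tq2 P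
    by (rule tq2.intro[OF tq.intro[OF assms(1-3)] tq2_axioms.intro[OF assms(4-5)]])
  have G: "T.G = (\<lambda>n. tail_quantile P (1 / real n))" by (simp add: T.G_def[abs_def] T.g_def)
  show ?thesis using T.main1 T.main2 unfolding G by simp
qed

end
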